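(* Under the setting and assumptions described in the context, the following hold: $\lim_{M\to\infty}\sup_{r>0}\frac{\Psi^*(r)}{\Psi^*(Mr)}=0$; $\int_{\mathbb R^d}e^{-t\Psi(\xi)}d\xi<\infty$ for every $t>0$; and there is $c\ge1$ with $\Psi^*(r)\le c\,\Psi_1^*(r)$ for all $r>0$.
   Context: Let $d\ge1$ and let $X$ be a symmetric Lévy process on $\mathbb R^d$ with Lévy exponent $\Psi(\xi)=\sum_{i,j=1}^d a_{ij}\xi_i\xi_j+\int_{\mathbb R^d}(1-\cos(\xi\cdot y))J(y)\,dy$ (i.e. $\mathbb E_x[e^{i\xi\cdot(X_t-X_0)}]=e^{-t\Psi(\xi)}$), $A=(a_{ij})$ constant symmetric nonnegative definite, $J\ge0$ symmetric on $\mathbb R^d\setminus\{0\}$ with $\int(1\wedge|z|^2)J(z)dz<\infty$. Put $\Psi^*(r)=\sup_{|z|\le r}\Psi(z)$, $\Psi_1^*(r)=\sup_{s\in(-r,r)}\Psi((0,\dots,0,s))$. Assumptions: (UJS) there is $c>0$ with $J(y)\le\frac{c}{r^d}\int_{B(0,r)}J(y-z)dz$ for all $y$ and $0<r\le|y|/2$. $\psi_1$ is increasing on $[0,\infty)$, $\psi_1(r)=1$ for $0<r\le1$, and for constants $0<b_1\le b_2$, $0<\gamma_1\le\gamma_2$, $\beta\in[0,\infty]$: $b_1e^{\gamma_1r^\beta}\le\psi_1(r)\le b_2e^{\gamma_2r^\beta}$ for $r>1$ (for $\beta=\infty$: $\psi_1(r)=\infty$ for $r>1$, $1/\infty=0$).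 $\phi_1$ is strictly increasing on $[0,\infty)$, $\phi_1(0)=0$, $\phi_1(1)=1$, and $a_3(R/r)^{\beta_1}\le\phi_1(R)/\phi_1(r)\le a_4(R/r)^{\beta_2}$ for $0<r<R$, with constants $a_3,a_4>0$, $0<\beta_1\le\beta_2<2$. There are $\gamma\ge1$, $\kappa_1,\kappa_2>0$, $a_0\ge0$ with $\gamma^{-1}a_0|\xi|^2\le\sum a_{ij}\xi_i\xi_j\le\gamma a_0|\xi|^2$ and $\gamma^{-1}\frac1{|x|^d\phi_1(|x|)\psi_1(\kappa_2|x|)}\le J(x)\le\gamma\frac1{|x|^d\phi_1(|x|)\psi_1(\kappa_1|x|)}$ for $x\ne0$. *)

theory Defs
  imports "HOL-Analysis.Analysis"
begin

definition levy_exponent :: "real^'n^'n \<Rightarrow> (real^'n \<Rightarrow> real) \<Rightarrow> real^'n \<Rightarrow> real" where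
  "levy_exponent A J \<xi> = \<xi> \<bullet> (A *v \<xi>) + (LINT y|lborel. (1 - cos (\<xi> \<bullet> y)) * J y)"

definition Psi_star :: "(real^'n \<Rightarrow> real) \<Rightarrow> real \<Rightarrow> real" where
  "Psi_star \<Psi> r = (SUP z\<in>cball 0 r. \<Psi> z)"

definition Psi1_star :: "(real^'n \<Rightarrow> real) \<Rightarrow> 'n \<Rightarrow> real \<Rightarrow> real" where
  "Psi1_star \<Psi> k r = (SUP s\<in>{-r<..<r}. \<Psi> (axis k s))"

end

theory Submission imports Defs "HOL-Probability.Sinc_Integral" begin

lemma one_minus_cos_le: "1 - cos (x::real) \<le> x^2 / 2"
proof -
  have "cos x = 1 - 2 * sin (x/2) ^ 2" using cos_double_sin[of "x/2"] by simp
  moreover have "sin (x/2)^2 \<le> (x/2)^2"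
    using abs_sin_x_le_abs_x[of "x/2"] by (metis abs_ge_zero power2_abs power_mono)
  ultimately show ?thesis by (simp add: power_divide)
qed

lemma one_minus_cos_double: "1 - cos (2*x::real) \<le> 4 * (1 - cos x)"
proof -
  have "1 - cos (2*x) = 2 * (1 - cos x) * (1 + cos x)"
    using cos_double_cos[of x] by (simp add: algebra_simps power2_eq_square)
  also have "\<dots> \<le> 2 * (1 - cos x) * 2"
    by (intro mult_left_mono) auto
  finally show ?thesis by simp
qed

lemma abs_sin_sum_le:
  assumes "finite I" shows "\<bar>sin (\<Sum>i\<in>I. f i)\<bar> \<le> (\<Sum>i\<in>I. \<bar>sin (f i::real)\<bar>)"
  using assms
proof (induction I rule: finite_induct)
  case (insert x F)
  have "\<bar>sin (f x + sum f F)\<bar> \<le> \<bar>sin (f x)\<bar> * \<bar>cos (sum f F)\<bar> + \<bar>cos (f x)\<bar> * \<bar>sin (sum f F)\<bar>"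
    by (simp add: sin_add abs_mult[symmetric] abs_triangle_ineq)
  also have "\<dots> \<le> \<bar>sin (f x)\<bar> + \<bar>sin (sum f F)\<bar>"
    by (intro add_mono mult_right_le_one_le mult_left_le_one_le) auto
  finally show ?case using insert by simp
qed simp

lemma one_minus_cos_sum_le:
  assumes "finite I"
  shows "1 - cos (\<Sum>i\<in>I. f i) \<le> real (card I) * (\<Sum>i\<in>I. 1 - cos (f i::real))"
proof -
  have e: "1 - cos y = 2 * sin (y/2)^2" for y::real
    using cos_double_sin[of "y/2"] by simp
  have "sin ((\<Sum>i\<in>I. f i)/2)^2 = \<bar>sin (\<Sum>i\<in>I. f i/2)\<bar>^2"
    by (simp add: sum_divide_distrib)
  also have "\<dots> \<le> (\<Sum>i\<in>I. \<bar>sin (f i/2)\<bar>)^2"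
    by (intro power_mono abs_sin_sum_le assms) auto
  also have "\<dots> \<le> (\<Sum>i\<in>I. \<bar>sin (f i/2)\<bar>^2) * real (card I)"
    by (rule sum_squared_le_sum_of_squares)
  finally have "sin ((\<Sum>i\<in>I. f i)/2)^2 \<le> real (card I) * (\<Sum>i\<in>I. sin (f i/2)^2)"
    by (simp add: mult.commute)
  then show ?thesis unfolding e by (simp add: sum_distrib_left[symmetric])
qed


lemma nn_integral_scale_euclid:
  fixes f :: "'a::euclidean_space \<Rightarrow> ennreal"
  assumes [measurable]: "f \<in> borel_measurable borel" and c: "c > 0"
  shows "(\<integral>\<^sup>+x. f x \<partial>lborel) = ennreal (c ^ DIM('a)) * (\<integral>\<^sup>+x. f (c *\<^sub>R x) \<partial>lborel)"
proof -
  have "(\<integral>\<^sup>+x. f x \<partial>lborel) = (\<integral>\<^sup>+x. f x \<partial>density (distr lborel borel (\<lambda>x. 0 + c *\<^sub>R x)) (\<lambda>_. \<bar>c\<bar>^DIM('a)))"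
    using arg_cong[OF lborel_affine[of c "0::'a"], of "\<lambda>M. \<integral>\<^sup>+x. f x \<partial>M"] c by simp
  also have "\<dots> = (\<integral>\<^sup>+x. ennreal (\<bar>c\<bar>^DIM('a)) * f x \<partial>distr lborel borel (\<lambda>x. 0 + c *\<^sub>R x))"
    by (subst nn_integral_density) auto
  also have "\<dots> = (\<integral>\<^sup>+x. ennreal (\<bar>c\<bar>^DIM('a)) * f (c *\<^sub>R x) \<partial>lborel)"
    by (subst nn_integral_distr) auto
  also have "\<dots> = ennreal (c ^ DIM('a)) * (\<integral>\<^sup>+x. f (c *\<^sub>R x) \<partial>lborel)"
    using c by (subst nn_integral_cmult) auto
  finally show ?thesis .
qed

definition swapc :: "'n \<Rightarrow> 'n \<Rightarrow> 'n \<Rightarrow> 'n" where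
  "swapc i j k = (if k = i then j else if k = j then i else k)"

definition swapv :: "'n \<Rightarrow> 'n \<Rightarrow> real^'n \<Rightarrow> real^'n" where
  "swapv i j x = (\<chi> k. x $ swapc i j k)"

lemma swapc_swapc[simp]: "swapc i j (swapc i j k) = k"
  by (simp add: swapc_def)

lemma bij_swapc: "bij_betw (swapc i j) UNIV UNIV"
  by (rule bij_betw_byWitness[where f'="swapc i j"]) auto

lemma swapv_swapv[simp]: "swapv i j (swapv i j x) = x"
  by (simp add: swapv_def vec_eq_iff)

lemma swapv_nth[simp]: "swapv i j x $ k = x $ swapc i j k"
  by (simp add: swapv_def)

lemma linear_swapv: "linear (swapv i j)"
  by (auto simp: linear_iff vec_eq_iff)

lemma norm_swapv[simp]: "norm (swapv i j x) = norm x"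
proof -
  have "(\<Sum>k\<in>UNIV. (x $ swapc i j k)^2) = (\<Sum>k\<in>UNIV. (x $ k)^2)"
    by (rule sum.reindex_bij_betw[OF bij_swapc])
  then show ?thesis by (simp add: norm_vec_def L2_set_def)
qed

lemma swapv_axis: "swapv i j (axis i s) = axis j s"
  by (auto simp: vec_eq_iff axis_def swapc_def)

lemma swapv_meas[measurable]: "swapv i j \<in> borel_measurable borel"
  by (intro borel_measurable_continuous_onI linear_continuous_on linear_swapv[THEN linear_conv_bounded_linear[THEN iffD1]])

lemma prod_Basis_vec: "(\<Prod>b\<in>(Basis::(real^'n) set). f b) = (\<Prod>k\<in>UNIV. f (axis k 1))"
proof -
  have "(Basis::(real^'n) set) = range (\<lambda>k. axis k 1)"
    by (auto simp: Basis_vec_def)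
  moreover have "inj (\<lambda>k::'n. axis k (1::real))"
    by (auto simp: inj_def axis_eq_axis)
  ultimately show ?thesis using prod.reindex[of "\<lambda>k::'n. axis k (1::real)" UNIV f] by (simp add: o_def)
qed

lemma prod_swapc: "(\<Prod>k\<in>UNIV. f (swapc i j k)) = (\<Prod>k\<in>UNIV. (f k :: 'b::comm_monoid_mult))"
proof (rule prod.reindex_bij_betw)
  show "bij_betw (swapc i j) UNIV UNIV" by (rule bij_swapc)
qed

lemma distr_swapv: "distr lborel borel (swapv i j) = (lborel :: (real^'n) measure)"
proof (rule lborel_eqI[symmetric])
  fix l u :: "real^'n"
  assume le: "\<And>b. b \<in> Basis \<Longrightarrow> l \<bullet> b \<le> u \<bullet> b"
  have pre: "swapv i j -` box l u = box (swapv i j l) (swapv i j u)"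
  proof -
    have "x \<in> box l u \<longleftrightarrow> (\<forall>k. l $ k < x $ k \<and> x $ k < u $ k)" for x
      by (simp add: mem_box_cart)
    then show ?thesis
      apply (auto simp: mem_box_cart)
      apply (metis swapc_swapc)+
      done
  qed
  have "emeasure (distr lborel borel (swapv i j)) (box l u) = emeasure lborel (box (swapv i j l) (swapv i j u))"
    by (simp add: emeasure_distr pre)
  also have "\<dots> = (\<Prod>b\<in>Basis. (swapv i j u - swapv i j l) \<bullet> b)"
  proof (rule emeasure_lborel_box)
    fix b :: "real^'n" assume "b \<in> Basis"
    then obtain k where "b = axis k 1" by (auto simp: Basis_vec_def)
    moreover have "l $ swapc i j k \<le> u $ swapc i j k"
      using le[of "axis (swapc i j k) 1"] by (auto simp: Basis_vec_def cart_eq_inner_axis[symmetric] inner_axis)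
    ultimately show "(swapv i j l) \<bullet> b \<le> (swapv i j u) \<bullet> b" by (simp add: inner_axis)
  qed
  also have "\<dots> = (\<Prod>k\<in>UNIV. u $ swapc i j k - l $ swapc i j k)"
    by (simp add: prod_Basis_vec inner_axis)
  also have "\<dots> = (\<Prod>k\<in>UNIV. u $ k - l $ k)"
    using prod_swapc[of "\<lambda>k. u $ k - l $ k" i j] by simp
  also have "\<dots> = (\<Prod>b\<in>Basis. (u - l) \<bullet> b)"
    by (simp add: prod_Basis_vec inner_axis)
  finally show "emeasure (distr lborel borel (swapv i j)) (box l u) = (\<Prod>b\<in>Basis. (u - l) \<bullet> b)" .
qed simp

lemma nn_integral_swapv:
  assumes [measurable]: "f \<in> borel_measurable borel"
  shows "(\<integral>\<^sup>+x. f (swapv i j x) \<partial>lborel) = (\<integral>\<^sup>+x. f x \<partial>(lborel :: (real^'n) measure))"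
proof -
  have "(\<integral>\<^sup>+x. f x \<partial>(lborel :: (real^'n) measure)) = (\<integral>\<^sup>+x. f x \<partial>distr lborel borel (swapv i j))"
    by (simp add: distr_swapv)
  also have "\<dots> = (\<integral>\<^sup>+x. f (swapv i j x) \<partial>lborel)"
    by (subst nn_integral_distr) auto
  finally show ?thesis by simp
qed


lemma integrable_inv_1_sq: "integrable lborel (\<lambda>x::real. inverse (1 + x^2))"
proof -
  have "einterval (-\<infinity>) \<infinity> = (UNIV :: real set)" by (auto simp: einterval_iff)
  then show ?thesis using integrable_inverse_1_plus_square by (simp add: set_integrable_def)
qed

lemma integrable_exp_neg_powr:
  fixes b \<beta> :: real
  assumes b: "b > 0" and \<beta>: "\<beta> > 0"
  shows "integrable lborel (\<lambda>x::real. exp (- b * \<bar>x\<bar> powr \<beta>))"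
proof -
  define n where "n = nat \<lceil>2 / \<beta>\<rceil>"
  have n\<beta>: "real n * \<beta> \<ge> 2"
  proof -
    have "real n \<ge> 2 / \<beta>" unfolding n_def by linarith
    then show ?thesis using \<beta> by (simp add: field_simps)
  qed
  have n1: "n \<ge> 1" using n\<beta> \<beta> by (cases n) auto
  define K where "K = 2 * max 1 ((real n / b) ^ n)"
  have bnd: "exp (- b * \<bar>x\<bar> powr \<beta>) \<le> K * inverse (1 + x^2)" for x :: real
  proof (cases "\<bar>x\<bar> \<le> 1")
    case True
    have "\<bar>x\<bar>^2 \<le> 1" using True by (intro power_le_one) auto
    then have "x^2 \<le> 1" by simp
    then have "1 \<le> 2 / (1 + x^2)" by (simp add: le_divide_eq add_pos_nonneg)
    then have "1 \<le> 2 * inverse (1 + x^2)" by (simp add: divide_inverse)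
    also have "\<dots> \<le> K * inverse (1 + x^2)" unfolding K_def by (intro mult_right_mono) auto
    finally have "1 \<le> K * inverse (1 + x^2)" .
    moreover have "exp (- b * \<bar>x\<bar> powr \<beta>) \<le> 1" using b by simp
    ultimately show ?thesis by linarith
  next
    case False
    define u where "u = b * \<bar>x\<bar> powr \<beta>"
    have x0: "\<bar>x\<bar> > 0" using False by simp
    have u0: "u \<ge> 0" unfolding u_def using b by simp
    have "u / real n \<le> exp (u / real n)" using exp_ge_add_one_self[of "u / real n"] by linarith
    then have "(u / real n) ^ n \<le> exp (u / real n) ^ n" using u0 by (intro power_mono) auto
    also have "\<dots> = exp u" using n1 by (simp add: exp_of_nat_mult[symmetric])
    finally have e1: "(u / real n) ^ n \<le> exp u" .
    have "(u / real n) ^ n = (b / real n) ^ n * \<bar>x\<bar> powr (real n * \<beta>)"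
      using x0 by (simp add: u_def power_divide power_mult_distrib powr_power field_simps)
    also have "\<dots> \<ge> (b / real n) ^ n * \<bar>x\<bar> powr 2"
      using False n\<beta> b by (intro mult_left_mono powr_mono) auto
    finally have "(b / real n) ^ n * x^2 \<le> exp u"
      using e1 x0 by (simp add: powr_numeral)
    moreover have "x^2 \<ge> (1 + x^2) / 2"
    proof -
      have "1 \<le> \<bar>x\<bar>^2" using False by (intro one_le_power) auto
      then show ?thesis by simp
    qed
    ultimately have e2: "(b / real n) ^ n * ((1 + x^2) / 2) \<le> exp u"
    proof -
      assume a1: "(b / real n) ^ n * x^2 \<le> exp u" and a2: "x^2 \<ge> (1 + x^2) / 2"
      have "(b / real n) ^ n * ((1 + x^2) / 2) \<le> (b / real n) ^ n * x^2"
        using a2 b by (intro mult_left_mono) auto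
      with a1 show ?thesis by linarith
    qed
    have bn: "(b / real n) ^ n > 0" using b n1 by simp
    have "exp (- u) = inverse (exp u)" by (simp add: exp_minus)
    also have "\<dots> \<le> inverse ((b / real n) ^ n * ((1 + x^2) / 2))"
    proof (rule le_imp_inverse_le[OF e2])
      have "0 < 1 + x^2" by (simp add: add_pos_nonneg)
      then show "0 < (b / real n) ^ n * ((1 + x^2) / 2)" using bn by simp
    qed
    also have "\<dots> = 2 * (real n / b) ^ n * inverse (1 + x^2)"
      using b n1 by (simp add: field_simps power_divide)
    also have "\<dots> \<le> K * inverse (1 + x^2)"
      unfolding K_def by (intro mult_right_mono) auto
    finally show ?thesis by (simp add: u_def)
  qed
  show ?thesis
  proof (rule Bochner_Integration.integrable_bound[OF integrable_mult_right[OF integrable_inv_1_sq, of K]])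
    show "AE x in lborel. norm (exp (- b * \<bar>x\<bar> powr \<beta>)) \<le> norm (K * inverse (1 + x^2))"
    proof (intro AE_I2)
      fix x :: real
      have "K \<ge> 0" unfolding K_def by simp
      moreover have "inverse (1 + x^2) \<ge> 0" by simp
      ultimately have "norm (K * inverse (1 + x^2)) = K * inverse (1 + x^2)" by simp
      then show "norm (exp (- b * \<bar>x\<bar> powr \<beta>)) \<le> norm (K * inverse (1 + x^2))" using bnd[of x] by simp
    qed
  qed simp
qed

lemma integrable_prod_coords:
  fixes h :: "real \<Rightarrow> real"
  assumes hm[measurable]: "h \<in> borel_measurable borel" and h0: "\<And>x. h x \<ge> 0"
    and hi: "integrable lborel h"
  shows "integrable lborel (\<lambda>\<xi>::real^'n. \<Prod>i\<in>UNIV. h (\<xi> $ i))"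
proof (subst integrable_iff_bounded, intro conjI)
  show "(\<lambda>\<xi>::real^'n. \<Prod>i\<in>UNIV. h (\<xi> $ i)) \<in> borel_measurable lborel" by measurable
  have fin: "(\<integral>\<^sup>+x. ennreal (h x) \<partial>lborel) < \<infinity>"
    using hi h0 by (simp add: integrable_iff_bounded)
  have eq: "ennreal (norm (\<Prod>i\<in>UNIV. h (\<xi> $ i))) = (\<Prod>b\<in>Basis. ennreal (h (\<xi> \<bullet> b)))" for \<xi> :: "real^'n"
  proof -
    have "ennreal (norm (\<Prod>i\<in>UNIV. h (\<xi> $ i))) = ennreal (\<Prod>i\<in>UNIV. h (\<xi> $ i))"
      using h0 by (simp add: prod_nonneg)
    also have "\<dots> = (\<Prod>i\<in>UNIV. ennreal (h (\<xi> $ i)))" using h0 by (simp add: prod_ennreal)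
    also have "\<dots> = (\<Prod>b\<in>Basis. ennreal (h (\<xi> \<bullet> b)))" by (simp add: prod_Basis_vec inner_axis)
    finally show ?thesis .
  qed
  have "(\<integral>\<^sup>+\<xi>. ennreal (norm (\<Prod>i\<in>UNIV. h ((\<xi>::real^'n) $ i))) \<partial>lborel)
        = (\<integral>\<^sup>+\<xi>. (\<Prod>b\<in>Basis. ennreal (h ((\<xi>::real^'n) \<bullet> b))) \<partial>lborel)"
    by (simp only: eq)
  also have "\<dots> = (\<Prod>b\<in>(Basis::(real^'n) set). (\<integral>\<^sup>+x. ennreal (h x) \<partial>lborel))"
    by (rule nn_integral_lborel_prod[where f="\<lambda>b x. ennreal (h x)"]) auto
  also have "\<dots> = (\<integral>\<^sup>+x. ennreal (h x) \<partial>lborel) ^ card (Basis::(real^'n) set)" by simp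
  also have "\<dots> < \<infinity>" using fin by (simp add: power_less_top_ennreal)
  finally show "(\<integral>\<^sup>+\<xi>. ennreal (norm (\<Prod>i\<in>UNIV. h ((\<xi>::real^'n) $ i))) \<partial>lborel) < \<infinity>" .
qed

locale levy_setting =
  fixes A :: "real^'n^'n" and J :: "real^'n \<Rightarrow> real"
    and \<psi>1 :: "real \<Rightarrow> ereal" and \<phi>1 :: "real \<Rightarrow> real"
    and a3 a4 \<beta>1 \<beta>2 \<gamma> \<kappa>1 \<kappa>2 a0 :: real
  assumes A_nonneg: "\<And>\<xi>. \<xi> \<bullet> (A *v \<xi>) \<ge> 0"
    and J_meas: "J \<in> borel_measurable borel"
    and J_nonneg: "\<And>y. y \<noteq> 0 \<Longrightarrow> J y \<ge> 0"
    and J_int: "integrable lborel (\<lambda>z. min 1 (norm z ^ 2) * J z)"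
    and \<psi>1_mono: "mono_on {0..} \<psi>1"
    and \<psi>1_small: "\<And>r. 0 < r \<Longrightarrow> r \<le> 1 \<Longrightarrow> \<psi>1 r = 1"
    and \<phi>1_strict: "strict_mono_on {0..} \<phi>1"
    and \<phi>1_0: "\<phi>1 0 = 0" and \<phi>1_1: "\<phi>1 1 = 1"
    and a3_pos: "a3 > 0"
    and \<beta>12: "0 < \<beta>1" "\<beta>1 \<le> \<beta>2" "\<beta>2 < 2"
    and \<phi>1_scale: "\<And>r R. 0 < r \<Longrightarrow> r < R \<Longrightarrow>
               a3 * (R / r) powr \<beta>1 \<le> \<phi>1 R / \<phi>1 r \<and> \<phi>1 R / \<phi>1 r \<le> a4 * (R / r) powr \<beta>2"
    and \<gamma>_ge: "\<gamma> \<ge> 1"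
    and \<kappa>_pos: "\<kappa>1 > 0" "\<kappa>2 > 0"
    and a0_nonneg: "a0 \<ge> 0"
    and A_ell: "\<And>\<xi>. a0 / \<gamma> * norm \<xi> ^ 2 \<le> \<xi> \<bullet> (A *v \<xi>) \<and>
                     \<xi> \<bullet> (A *v \<xi>) \<le> \<gamma> * a0 * norm \<xi> ^ 2"
    and J_bounds: "\<And>x. x \<noteq> 0 \<Longrightarrow>
        ereal (1 / \<gamma>) / (ereal (norm x ^ CARD('n) * \<phi>1 (norm x)) * \<psi>1 (\<kappa>2 * norm x)) \<le> ereal (J x) \<and>
        ereal (J x) \<le> ereal \<gamma> / (ereal (norm x ^ CARD('n) * \<phi>1 (norm x)) * \<psi>1 (\<kappa>1 * norm x))"
begin

abbreviation "Psi \<equiv> levy_exponent A J"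
definition "Q \<xi> = \<xi> \<bullet> (A *v \<xi>)"
definition "g \<xi> y = (1 - cos (\<xi> \<bullet> y)) * J y"
definition "KJ = (LINT z|lborel. min 1 (norm z ^ 2) * J z)"

lemma J_meas'[measurable]: "J \<in> borel_measurable lborel"
  using J_meas by simp

lemma g_nonneg: "g \<xi> y \<ge> 0"
  unfolding g_def by (cases "y = 0") (auto intro!: mult_nonneg_nonneg J_nonneg)

lemma g_meas[measurable]: "g \<xi> \<in> borel_measurable lborel"
  unfolding g_def by measurable

lemma g_bound: "g \<xi> y \<le> 2 * max 1 (norm \<xi> ^ 2) * (min 1 (norm y ^ 2) * J y)"
proof (cases "y = 0")
  case True then show ?thesis by (simp add: g_def)
next
  case False
  have J0: "J y \<ge> 0" using J_nonneg False by auto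
  have c: "1 - cos (\<xi> \<bullet> y) \<le> 2 * max 1 (norm \<xi> ^ 2) * min 1 (norm y ^ 2)"
  proof (cases "norm y ^ 2 \<le> 1")
    case True
    have "\<bar>\<xi> \<bullet> y\<bar> \<le> norm \<xi> * norm y" by (rule Cauchy_Schwarz_ineq2)
    then have "(\<xi> \<bullet> y)^2 \<le> (norm \<xi> * norm y)^2"
      by (metis abs_ge_zero power2_abs power_mono)
    then have "1 - cos (\<xi> \<bullet> y) \<le> (norm \<xi> * norm y)^2 / 2"
      using one_minus_cos_le[of "\<xi> \<bullet> y"] by linarith
    also have "\<dots> \<le> 2 * max 1 (norm \<xi> ^ 2) * norm y ^ 2"
    proof -
      have "norm \<xi> ^ 2 \<le> 4 * max 1 (norm \<xi> ^ 2)" by linarith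
      from mult_right_mono[OF this, of "norm y ^ 2"]
      show ?thesis by (simp add: power_mult_distrib)
    qed
    finally show ?thesis using True by simp
  next
    case False
    have "1 - cos (\<xi> \<bullet> y) \<le> 2" using cos_ge_minus_one[of "\<xi> \<bullet> y"] by linarith
    also have "\<dots> \<le> 2 * max 1 (norm \<xi> ^ 2)" by simp
    finally show ?thesis using False by simp
  qed
  show ?thesis unfolding g_def using mult_right_mono[OF c J0] by (simp add: mult.assoc)
qed

lemma g_int: "integrable lborel (g \<xi>)"
proof (rule Bochner_Integration.integrable_bound[OF integrable_mult_right[OF J_int, of "2 * max 1 (norm \<xi> ^ 2)"]])
  show "AE x in lborel. norm (g \<xi> x) \<le> norm (2 * max 1 (norm \<xi>^2) * (min 1 (norm x ^ 2) * J x))"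
  proof (intro AE_I2)
    fix x
    have "0 \<le> g \<xi> x" by (rule g_nonneg)
    moreover have "g \<xi> x \<le> 2 * max 1 (norm \<xi>^2) * (min 1 (norm x ^ 2) * J x)" by (rule g_bound)
    ultimately show "norm (g \<xi> x) \<le> norm (2 * max 1 (norm \<xi>^2) * (min 1 (norm x ^ 2) * J x))"
      by simp
  qed
qed simp

lemma Psi_eq: "Psi \<xi> = Q \<xi> + integral\<^sup>L lborel (g \<xi>)"
  unfolding levy_exponent_def Q_def g_def[abs_def] by simp

lemma Q_nonneg: "Q \<xi> \<ge> 0" by (simp add: Q_def A_nonneg)

lemma Ig_nonneg: "integral\<^sup>L lborel (g \<xi>) \<ge> 0"
  by (simp add: g_nonneg)

lemma Psi_nonneg: "Psi \<xi> \<ge> 0"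
  using Q_nonneg Ig_nonneg Psi_eq by (metis add_nonneg_nonneg)

lemma KJ_nonneg: "KJ \<ge> 0"
  unfolding KJ_def
proof (rule integral_nonneg_AE)
  show "AE x in lborel. 0 \<le> min 1 (norm x ^ 2) * J x"
    using AE_lborel_singleton[of 0]
  proof eventually_elim
    case (elim x) then show ?case using J_nonneg[of x] by simp
  qed
qed

lemma Psi_upper: "Psi \<xi> \<le> \<gamma> * a0 * norm \<xi> ^ 2 + 2 * max 1 (norm \<xi> ^ 2) * KJ"
proof -
  have "integral\<^sup>L lborel (g \<xi>) \<le> (LINT y|lborel. 2 * max 1 (norm \<xi> ^ 2) * (min 1 (norm y ^ 2) * J y))"
    by (intro integral_mono g_int integrable_mult_right J_int g_bound)
  also have "\<dots> = 2 * max 1 (norm \<xi> ^ 2) * KJ" by (simp add: KJ_def)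
  finally show ?thesis using A_ell[of \<xi>] by (simp add: Psi_eq Q_def)
qed

lemma Psi_upper_mono: "norm \<xi> \<le> r \<Longrightarrow> Psi \<xi> \<le> \<gamma> * a0 * r ^ 2 + 2 * max 1 (r ^ 2) * KJ"
proof -
  assume r: "norm \<xi> \<le> r"
  have "norm \<xi> ^ 2 \<le> r^2" using r by (simp add: power_mono)
  then have "\<gamma> * a0 * norm \<xi> ^ 2 + 2 * max 1 (norm \<xi> ^ 2) * KJ \<le> \<gamma> * a0 * r ^ 2 + 2 * max 1 (r ^ 2) * KJ"
    using \<gamma>_ge a0_nonneg KJ_nonneg
    by (intro add_mono mult_left_mono mult_right_mono) auto
  then show ?thesis using Psi_upper[of \<xi>] by linarith
qed


definition "N v = norm v ^ CARD('n) * \<phi>1 (norm v)"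

lemma \<phi>1_pos: "s > 0 \<Longrightarrow> \<phi>1 s > 0"
  using strict_mono_onD[OF \<phi>1_strict, of 0 s] \<phi>1_0 by simp

lemma \<phi>1_mono: "0 \<le> s \<Longrightarrow> s \<le> t \<Longrightarrow> \<phi>1 s \<le> \<phi>1 t"
proof (cases "s = t")
  case False
  assume "0 \<le> s" "s \<le> t"
  then show ?thesis using strict_mono_onD[OF \<phi>1_strict, of s t] False by simp
qed simp

lemma N_pos: "v \<noteq> 0 \<Longrightarrow> N v > 0"
  unfolding N_def using \<phi>1_pos[of "norm v"] by simp

lemma \<psi>1_ge1: "s > 0 \<Longrightarrow> \<psi>1 s \<ge> 1"
proof (cases "s \<le> 1")
  case True assume "s > 0" then show ?thesis using True \<psi>1_small by simp
next
  case False
  then have "\<psi>1 1 \<le> \<psi>1 s" by (intro mono_onD[OF \<psi>1_mono]) auto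
  then show ?thesis using \<psi>1_small[of 1] by simp
qed

lemma J_upper_ereal: "x \<noteq> 0 \<Longrightarrow> ereal (J x) \<le> ereal \<gamma> / (ereal (N x) * \<psi>1 (\<kappa>1 * norm x))"
  unfolding N_def by (rule conjunct2[OF J_bounds])

lemma J_lower_ereal: "x \<noteq> 0 \<Longrightarrow> ereal (1 / \<gamma>) / (ereal (N x) * \<psi>1 (\<kappa>2 * norm x)) \<le> ereal (J x)"
  unfolding N_def by (rule conjunct1[OF J_bounds])

lemma J_compare:
  assumes x: "x \<noteq> 0" and w: "w \<noteq> 0" and k: "\<kappa>2 * norm w \<le> \<kappa>1 * norm x"
  shows "J x \<le> \<gamma>^2 * (N w / N x) * J w"
proof -
  define p where "p = \<psi>1 (\<kappa>1 * norm x)"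
  define q where "q = \<psi>1 (\<kappa>2 * norm w)"
  have q1: "q \<ge> 1" unfolding q_def using \<psi>1_ge1 \<kappa>_pos w by simp
  have qp: "q \<le> p" unfolding p_def q_def
  proof (rule mono_onD[OF \<psi>1_mono])
    show "\<kappa>2 * norm w \<in> {0..}" using \<kappa>_pos by simp
    show "\<kappa>1 * norm x \<in> {0..}" using \<kappa>_pos by simp
  qed (rule k)
  have Nx: "N x > 0" and Nw: "N w > 0" using N_pos x w by auto
  have Jw: "J w \<ge> 0" using J_nonneg w by auto
  have ux: "ereal (J x) \<le> ereal \<gamma> / (ereal (N x) * p)" using J_upper_ereal[OF x] p_def by simp
  have lw: "ereal (1 / \<gamma>) / (ereal (N w) * q) \<le> ereal (J w)" using J_lower_ereal[OF w] q_def by simp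
  have g0: "\<gamma> > 0" using \<gamma>_ge by simp
  show ?thesis
  proof (cases p)
    case PInf
    then have "ereal \<gamma> / (ereal (N x) * p) = 0" using Nx by simp
    then have "J x \<le> 0" using ux by simp
    moreover have "0 \<le> \<gamma>^2 * (N w / N x) * J w" using Nx Nw Jw by simp
    ultimately show ?thesis by linarith
  next
    case MInf then show ?thesis using q1 qp by simp
  next
    case (real p')
    then obtain q' where q': "q = ereal q'" using q1 qp by (cases q) auto
    have q'1: "q' \<ge> 1" and qp': "q' \<le> p'" using q1 qp q' real by auto
    have ux': "J x \<le> \<gamma> / (N x * p')" using ux real Nx q'1 qp' by simp
    have lw': "1 / \<gamma> / (N w * q') \<le> J w" using lw q' Nw q'1 by simp
    have "\<gamma> / (N x * p') = \<gamma>^2 * (N w / N x) * (1 / \<gamma> / (N w * p'))"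
      using Nx Nw g0 q'1 qp' by (simp add: field_simps power2_eq_square)
    also have "\<dots> \<le> \<gamma>^2 * (N w / N x) * (1 / \<gamma> / (N w * q'))"
    proof (rule mult_left_mono)
      have "N w * q' \<le> N w * p'" using Nw qp' by simp
      moreover have "0 < N w * q'" using Nw q'1 by simp
      ultimately show "1 / \<gamma> / (N w * p') \<le> 1 / \<gamma> / (N w * q')"
        using g0 by (intro divide_left_mono) auto
      show "0 \<le> \<gamma>^2 * (N w / N x)" using Nx Nw by simp
    qed
    also have "\<dots> \<le> \<gamma>^2 * (N w / N x) * J w"
      using Nx Nw lw' by (intro mult_left_mono) simp_all
    finally have "\<gamma> / (N x * p') \<le> \<gamma>^2 * (N w / N x) * J w" .
    with ux' show ?thesis by (rule order_trans)
  qed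
qed


definition "Ig \<xi> = integral\<^sup>L lborel (g \<xi>)"

lemma Ig_nn: "(\<integral>\<^sup>+y. ennreal (g \<xi> y) \<partial>lborel) = ennreal (Ig \<xi>)"
  unfolding Ig_def by (rule nn_integral_eq_integral[OF g_int]) (simp add: g_nonneg)

lemma Psi_eq': "Psi \<xi> = Q \<xi> + Ig \<xi>"
  by (simp add: Psi_eq Ig_def)

lemma DIM_vec: "DIM(real^'n) = CARD('n)" by simp

definition "M0 = max 2 (\<kappa>2 / \<kappa>1)"

lemma M0_ge: "M0 \<ge> 2" unfolding M0_def by simp

lemma J_scale:
  assumes z: "z \<noteq> 0" and M: "M \<ge> M0"
  shows "a3 * M ^ CARD('n) * M powr \<beta>1 / \<gamma>^2 * J z \<le> J ((1/M) *\<^sub>R z)"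
proof -
  have M1: "M > 1" using M M0_ge by simp
  have Mk: "M \<ge> \<kappa>2 / \<kappa>1" using M unfolding M0_def by simp
  define w where "w = (1/M) *\<^sub>R z"
  have w: "w \<noteq> 0" using z M1 by (simp add: w_def)
  have nw: "norm w = norm z / M" using M1 by (simp add: w_def)
  have nz: "norm z > 0" using z by simp
  have "\<kappa>2 * norm w \<le> \<kappa>1 * norm z"
  proof -
    have "\<kappa>2 \<le> \<kappa>1 * M" using Mk \<kappa>_pos by (simp add: field_simps)
    then have "\<kappa>2 * norm z \<le> \<kappa>1 * M * norm z" using nz by (intro mult_right_mono) auto
    then have "\<kappa>2 * norm z \<le> \<kappa>1 * norm z * M" by (simp add: mult_ac)
    then have "\<kappa>2 * norm z / M \<le> \<kappa>1 * norm z" using M1 by (simp add: pos_divide_le_eq)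
    then show ?thesis using nw by simp
  qed
  from J_compare[OF z w this]
  have c: "J z \<le> \<gamma>^2 * (N w / N z) * J w" .
  have sc: "a3 * M powr \<beta>1 \<le> \<phi>1 (norm z) / \<phi>1 (norm z / M)"
    using conjunct1[OF \<phi>1_scale[of "norm z / M" "norm z"]] nz M1
    by (simp add: field_simps)
  have p1: "\<phi>1 (norm z / M) > 0" "\<phi>1 (norm z) > 0" using \<phi>1_pos nz M1 by auto
  have "N w / N z = (1/M)^CARD('n) * (\<phi>1 (norm z / M) / \<phi>1 (norm z))"
    unfolding N_def nw using nz M1 by (simp add: field_simps power_divide)
  also have "\<dots> \<le> (1/M)^CARD('n) * (1 / (a3 * M powr \<beta>1))"
  proof (rule mult_left_mono)
    have "a3 * M powr \<beta>1 > 0" using a3_pos M1 by simp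
    then show "\<phi>1 (norm z / M) / \<phi>1 (norm z) \<le> 1 / (a3 * M powr \<beta>1)"
      using sc p1 by (simp add: field_simps)
  qed (use M1 in simp)
  finally have Nq: "N w / N z \<le> (1/M)^CARD('n) * (1 / (a3 * M powr \<beta>1))" .
  have Jw: "J w \<ge> 0" using J_nonneg w by simp
  have "J z \<le> \<gamma>^2 * ((1/M)^CARD('n) * (1 / (a3 * M powr \<beta>1))) * J w"
    using c Nq Jw by (smt (verit) mult_left_mono mult_right_mono zero_le_power2)
  then show ?thesis using a3_pos M1 \<gamma>_ge unfolding w_def
    by (simp add: field_simps power_divide)
qed

lemma Ig_scale:
  assumes M: "M \<ge> M0"
  shows "a3 * M powr \<beta>1 / \<gamma>^2 * Ig \<xi> \<le> Ig (M *\<^sub>R \<xi>)"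
proof -
  have M1: "M > 1" using M M0_ge by simp
  define C where "C = a3 * M ^ CARD('n) * M powr \<beta>1 / \<gamma>^2"
  have C0: "C \<ge> 0" unfolding C_def
    by (intro divide_nonneg_nonneg mult_nonneg_nonneg) (use a3_pos M1 in auto)
  have pt: "ennreal (C * g \<xi> z) \<le> ennreal (g (M *\<^sub>R \<xi>) ((1/M) *\<^sub>R z))" for z
  proof (cases "z = 0")
    case True then show ?thesis by (simp add: g_def)
  next
    case False
    have e: "g (M *\<^sub>R \<xi>) ((1/M) *\<^sub>R z) = (1 - cos (\<xi> \<bullet> z)) * J ((1/M) *\<^sub>R z)"
      using M1 by (simp add: g_def)
    have "C * g \<xi> z = (1 - cos (\<xi> \<bullet> z)) * (C * J z)" by (simp add: g_def)
    also have "\<dots> \<le> (1 - cos (\<xi> \<bullet> z)) * J ((1/M) *\<^sub>R z)"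
      using J_scale[OF False M] unfolding C_def by (intro mult_left_mono) auto
    finally show ?thesis using e by (simp add: ennreal_leI)
  qed
  have "ennreal (Ig (M *\<^sub>R \<xi>)) = (\<integral>\<^sup>+y. ennreal (g (M *\<^sub>R \<xi>) y) \<partial>lborel)"
    by (simp add: Ig_nn)
  also have "\<dots> = ennreal ((1/M) ^ CARD('n)) * (\<integral>\<^sup>+z. ennreal (g (M *\<^sub>R \<xi>) ((1/M) *\<^sub>R z)) \<partial>lborel)"
    using nn_integral_scale_euclid[of "\<lambda>y. ennreal (g (M *\<^sub>R \<xi>) y)" "1/M"] M1 by simp
  also have "\<dots> \<ge> ennreal ((1/M) ^ CARD('n)) * (\<integral>\<^sup>+z. ennreal (C * g \<xi> z) \<partial>lborel)"
    by (intro mult_left_mono nn_integral_mono pt) auto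
  finally have "ennreal ((1/M) ^ CARD('n)) * (\<integral>\<^sup>+z. ennreal (C * g \<xi> z) \<partial>lborel) \<le> ennreal (Ig (M *\<^sub>R \<xi>))" .
  moreover have "(\<integral>\<^sup>+z. ennreal (C * g \<xi> z) \<partial>lborel) = ennreal C * ennreal (Ig \<xi>)"
  proof -
    have "(\<lambda>z. ennreal (C * g \<xi> z)) = (\<lambda>z. ennreal C * ennreal (g \<xi> z))"
      using C0 g_nonneg by (simp add: ennreal_mult)
    then show ?thesis by (simp add: nn_integral_cmult Ig_nn)
  qed
  moreover have "Ig \<xi> \<ge> 0" unfolding Ig_def by (rule Ig_nonneg)
  then have "ennreal ((1/M) ^ CARD('n) * C * Ig \<xi>) = ennreal ((1/M) ^ CARD('n)) * (ennreal C * ennreal (Ig \<xi>))"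
    using C0 M1 by (simp add: ennreal_mult mult.assoc)
  ultimately have "ennreal ((1/M) ^ CARD('n) * C * Ig \<xi>) \<le> ennreal (Ig (M *\<^sub>R \<xi>))"
    by simp
  moreover have "(1/M) ^ CARD('n) * C = a3 * M powr \<beta>1 / \<gamma>^2"
    using M1 unfolding C_def by (simp add: field_simps power_divide)
  moreover have "Ig (M *\<^sub>R \<xi>) \<ge> 0" unfolding Ig_def by (rule Ig_nonneg)
  ultimately show ?thesis by (simp add: ennreal_le_iff)
qed

definition "cM = min 1 (a3 / \<gamma>^2)"

lemma cM_pos: "cM > 0" unfolding cM_def using a3_pos \<gamma>_ge by simp

lemma Q_scale: "Q (c *\<^sub>R \<xi>) = c^2 * Q \<xi>"
  unfolding Q_def by (simp add: matrix_vector_mult_scaleR power2_eq_square)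

lemma Psi_scale:
  assumes M: "M \<ge> M0"
  shows "cM * M powr \<beta>1 * Psi \<xi> \<le> Psi (M *\<^sub>R \<xi>)"
proof -
  have M1: "M > 1" using M M0_ge by simp
  have "M powr \<beta>1 \<le> M powr 2" using M1 \<beta>12 by (intro powr_mono) auto
  then have Mp: "M powr \<beta>1 \<le> M^2" using M1 by (simp add: powr_numeral)
  have Q0: "Q \<xi> \<ge> 0" "Ig \<xi> \<ge> 0" using Q_nonneg Ig_nonneg by (auto simp: Ig_def)
  have "cM * M powr \<beta>1 * Q \<xi> \<le> M^2 * Q \<xi>"
  proof -
    have "cM * M powr \<beta>1 \<le> M powr \<beta>1"
      by (rule mult_left_le_one_le) (use cM_pos in \<open>auto simp: cM_def\<close>)
    then show ?thesis using Mp Q0 by (intro mult_right_mono) auto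
  qed
  moreover have "cM * M powr \<beta>1 * Ig \<xi> \<le> a3 * M powr \<beta>1 / \<gamma>^2 * Ig \<xi>"
  proof (rule mult_right_mono)
    have "cM \<le> a3 / \<gamma>^2" by (simp add: cM_def)
    then have "cM * M powr \<beta>1 \<le> a3 / \<gamma>^2 * M powr \<beta>1" by (intro mult_right_mono) auto
    then show "cM * M powr \<beta>1 \<le> a3 * M powr \<beta>1 / \<gamma>^2" by simp
  qed (use Q0 in auto)
  ultimately show ?thesis using Ig_scale[OF M, of \<xi>]
    by (simp add: Psi_eq' Q_scale distrib_left)
qed


lemma inner_vec_sum: "(\<xi>::real^'n) \<bullet> y = (\<Sum>i\<in>UNIV. \<xi> $ i * y $ i)"
  by (simp add: inner_vec_def)

lemma norm_sq_vec: "norm (\<xi>::real^'n) ^ 2 = (\<Sum>i\<in>UNIV. (\<xi> $ i)^2)"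
  unfolding power2_norm_eq_inner inner_vec_sum by (simp add: power2_eq_square)

lemma norm_axis_real: "norm (axis i (c::real) :: real^'n) = \<bar>c\<bar>"
  by (simp add: norm_eq_sqrt_inner inner_axis_axis)

lemma g_axis: "g (axis i s) y = (1 - cos (s * y $ i)) * J y"
  by (simp add: g_def inner_axis' mult.commute)

definition "Csum = max (real CARD('n)) (\<gamma>^2)"

lemma Ig_sum: "Ig \<xi> \<le> real CARD('n) * (\<Sum>i\<in>UNIV. Ig (axis i (\<xi> $ i)))"
proof -
  have pt: "g \<xi> y \<le> real CARD('n) * (\<Sum>i\<in>UNIV. g (axis i (\<xi> $ i)) y)" for y
  proof (cases "y = 0")
    case True then show ?thesis by (simp add: g_def)
  next
    case False
    then have J0: "J y \<ge> 0" using J_nonneg by simp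
    have "1 - cos (\<xi> \<bullet> y) \<le> real (card (UNIV::'n set)) * (\<Sum>i\<in>UNIV. 1 - cos (\<xi> $ i * y $ i))"
      unfolding inner_vec_sum by (rule one_minus_cos_sum_le) simp
    from mult_right_mono[OF this J0] show ?thesis
      unfolding g_axis by (simp add: g_def sum_distrib_right mult.assoc)
  qed
  have "Ig \<xi> \<le> (LINT y|lborel. real CARD('n) * (\<Sum>i\<in>UNIV. g (axis i (\<xi> $ i)) y))"
    unfolding Ig_def
    by (intro integral_mono g_int pt integrable_mult_right Bochner_Integration.integrable_sum)
  also have "\<dots> = real CARD('n) * (\<Sum>i\<in>UNIV. Ig (axis i (\<xi> $ i)))"
    by (simp add: Ig_def integral_sum g_int)
  finally show ?thesis .
qed

lemma Q_axis_lower: "a0 / \<gamma> * s^2 \<le> Q (axis i s)"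
  using conjunct1[OF A_ell[of "axis i s"]] by (simp add: Q_def norm_axis_real)

lemma Q_axis_upper: "Q (axis i s) \<le> \<gamma> * a0 * s^2"
  using conjunct2[OF A_ell[of "axis i s"]] by (simp add: Q_def norm_axis_real)

lemma Q_sum: "Q \<xi> \<le> \<gamma>^2 * (\<Sum>i\<in>UNIV. Q (axis i (\<xi> $ i)))"
proof -
  have "Q \<xi> \<le> \<gamma> * a0 * norm \<xi> ^ 2" using A_ell[of \<xi>] by (simp add: Q_def)
  also have "\<dots> = (\<Sum>i\<in>UNIV. \<gamma>^2 * (a0 / \<gamma> * (\<xi> $ i)^2))"
    unfolding norm_sq_vec using \<gamma>_ge by (simp add: sum_distrib_left power2_eq_square mult_ac)
  also have "\<dots> \<le> (\<Sum>i\<in>UNIV. \<gamma>^2 * Q (axis i (\<xi> $ i)))"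
    by (intro sum_mono mult_left_mono Q_axis_lower) auto
  finally show ?thesis by (simp add: sum_distrib_left)
qed

lemma Csum_ge: "Csum \<ge> 1" "Csum \<ge> real CARD('n)" "Csum \<ge> \<gamma>^2"
  unfolding Csum_def using \<gamma>_ge by (auto simp: le_max_iff_disj)
    
lemma Psi_sum: "Psi \<xi> \<le> Csum * (\<Sum>i\<in>UNIV. Psi (axis i (\<xi> $ i)))"
proof -
  have Q0: "Q v \<ge> 0" "Ig v \<ge> 0" for v using Q_nonneg Ig_nonneg by (auto simp: Ig_def)
  have "Psi \<xi> \<le> \<gamma>^2 * (\<Sum>i\<in>UNIV. Q (axis i (\<xi> $ i))) + real CARD('n) * (\<Sum>i\<in>UNIV. Ig (axis i (\<xi> $ i)))"
    using Q_sum Ig_sum by (simp add: Psi_eq' add_mono)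
  also have "\<dots> \<le> Csum * (\<Sum>i\<in>UNIV. Q (axis i (\<xi> $ i))) + Csum * (\<Sum>i\<in>UNIV. Ig (axis i (\<xi> $ i)))"
    using Csum_ge Q0 by (intro add_mono mult_right_mono sum_nonneg) auto
  also have "\<dots> = Csum * (\<Sum>i\<in>UNIV. Psi (axis i (\<xi> $ i)))"
    by (simp add: Psi_eq' sum.distrib distrib_left)
  finally show ?thesis .
qed

lemma Psi_double: "Psi (2 *\<^sub>R \<xi>) \<le> 4 * Psi \<xi>"
proof -
  have pt: "g (2 *\<^sub>R \<xi>) y \<le> 4 * g \<xi> y" for y
  proof (cases "y = 0")
    case True then show ?thesis by (simp add: g_def)
  next
    case False
    then have J0: "J y \<ge> 0" using J_nonneg by simp
    from mult_right_mono[OF one_minus_cos_double[of "\<xi> \<bullet> y"] J0] show ?thesis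
      by (simp add: g_def algebra_simps)
  qed
  have "Ig (2 *\<^sub>R \<xi>) \<le> (LINT y|lborel. 4 * g \<xi> y)"
    unfolding Ig_def by (intro integral_mono g_int pt integrable_mult_right)
  also have "\<dots> = 4 * Ig \<xi>" by (simp add: Ig_def)
  finally show ?thesis by (simp add: Psi_eq' Q_scale)
qed

lemma Psi_double_pow: "Psi ((2^m) *\<^sub>R \<xi>) \<le> 4^m * Psi \<xi>"
proof (induction m)
  case (Suc m)
  have "Psi ((2^Suc m) *\<^sub>R \<xi>) = Psi (2 *\<^sub>R ((2^m) *\<^sub>R \<xi>))" by simp
  also have "\<dots> \<le> 4 * Psi ((2^m) *\<^sub>R \<xi>)" by (rule Psi_double)
  also have "\<dots> \<le> 4 * (4^m * Psi \<xi>)" using Suc by simp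
  finally show ?case by simp
qed simp


definition "lam = min 1 (\<kappa>1 / \<kappa>2)"

lemma lam: "lam > 0" "lam \<le> 1" "\<kappa>2 * lam \<le> \<kappa>1"
  unfolding lam_def using \<kappa>_pos by (auto simp: min_def field_simps)

lemma g_meas'[measurable]: "g \<xi> \<in> borel_measurable borel"
  using g_meas by simp

lemma J_swap:
  assumes y: "y \<noteq> 0"
  shows "J y \<le> \<gamma>^2 * lam ^ CARD('n) * J (lam *\<^sub>R swapv i j y)"
proof -
  define w where "w = lam *\<^sub>R swapv i j y"
  have nw: "norm w = lam * norm y" using lam by (simp add: w_def)
  have ny: "norm y > 0" using y by simp
  have w: "w \<noteq> 0" using nw lam ny by auto
  have "\<kappa>2 * norm w \<le> \<kappa>1 * norm y"
    unfolding nw using lam ny by (metis mult.assoc mult_right_mono less_imp_le)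
  from J_compare[OF y w this] have c: "J y \<le> \<gamma>^2 * (N w / N y) * J w" .
  have p1: "\<phi>1 (lam * norm y) > 0" "\<phi>1 (norm y) > 0" using \<phi>1_pos ny lam by auto
  have "\<phi>1 (lam * norm y) \<le> \<phi>1 (norm y)"
    using lam ny by (intro \<phi>1_mono) (auto simp: mult_le_cancel_right1)
  then have "\<phi>1 (lam * norm y) / \<phi>1 (norm y) \<le> 1" using p1 by simp
  then have Nq: "N w / N y \<le> lam ^ CARD('n)"
    unfolding N_def nw using ny lam p1 by (simp add: power_mult_distrib field_simps)
  have Jw: "J w \<ge> 0" using J_nonneg w by simp
  have "\<gamma>^2 * (N w / N y) * J w \<le> \<gamma>^2 * lam ^ CARD('n) * J w"
    using Nq Jw by (intro mult_right_mono mult_left_mono) auto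
  with c show ?thesis unfolding w_def by linarith
qed

lemma Ig_swap: "Ig (axis i s) \<le> \<gamma>^2 * Ig (axis j (s / lam))"
proof -
  define F where "F = g (axis j (s / lam))"
  have Fm[measurable]: "F \<in> borel_measurable borel" unfolding F_def by simp
  have F0: "F z \<ge> 0" for z unfolding F_def by (rule g_nonneg)
  define K where "K = \<gamma>^2 * lam ^ CARD('n)"
  have K0: "K \<ge> 0" unfolding K_def using lam by simp
  have Fsw: "F (lam *\<^sub>R swapv i j y) = (1 - cos (s * y $ i)) * J (lam *\<^sub>R swapv i j y)" for y
    using lam by (simp add: F_def g_axis swapc_def)
  have pt: "ennreal (g (axis i s) y) \<le> ennreal K * ennreal (F (lam *\<^sub>R swapv i j y))" for y
  proof (cases "y = 0")
    case True then show ?thesis by (simp add: g_axis)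
  next
    case False
    have "g (axis i s) y \<le> (1 - cos (s * y $ i)) * (K * J (lam *\<^sub>R swapv i j y))"
      unfolding g_axis K_def by (intro mult_left_mono J_swap False) auto
    also have "\<dots> = K * F (lam *\<^sub>R swapv i j y)" by (simp add: Fsw)
    finally show ?thesis using K0 F0 by (simp add: ennreal_mult[symmetric] ennreal_leI)
  qed
  have "ennreal (Ig (axis i s)) = (\<integral>\<^sup>+y. ennreal (g (axis i s) y) \<partial>lborel)" by (simp add: Ig_nn)
  also have "\<dots> \<le> (\<integral>\<^sup>+y. ennreal K * ennreal (F (lam *\<^sub>R swapv i j y)) \<partial>lborel)"
    by (intro nn_integral_mono pt)
  also have "\<dots> = ennreal K * (\<integral>\<^sup>+y. ennreal (F (lam *\<^sub>R swapv i j y)) \<partial>lborel)"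
    by (simp add: nn_integral_cmult)
  also have "(\<integral>\<^sup>+y. ennreal (F (lam *\<^sub>R swapv i j y)) \<partial>lborel) = (\<integral>\<^sup>+z. ennreal (F (lam *\<^sub>R z)) \<partial>lborel)"
    by (rule nn_integral_swapv[of "\<lambda>z. ennreal (F (lam *\<^sub>R z))"]) simp
  finally have 1: "ennreal (Ig (axis i s)) \<le> ennreal K * (\<integral>\<^sup>+z. ennreal (F (lam *\<^sub>R z)) \<partial>lborel)" .
  have 2: "ennreal (Ig (axis j (s / lam))) = ennreal (lam ^ CARD('n)) * (\<integral>\<^sup>+z. ennreal (F (lam *\<^sub>R z)) \<partial>lborel)"
    using nn_integral_scale_euclid[of "\<lambda>z. ennreal (F z)" lam] lam
    by (simp add: Ig_nn[symmetric] F_def)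
  have "ennreal K * (\<integral>\<^sup>+z. ennreal (F (lam *\<^sub>R z)) \<partial>lborel)
        = ennreal (\<gamma>^2) * (ennreal (lam ^ CARD('n)) * (\<integral>\<^sup>+z. ennreal (F (lam *\<^sub>R z)) \<partial>lborel))"
    unfolding K_def using lam by (simp add: ennreal_mult mult.assoc)
  also have "\<dots> = ennreal (\<gamma>^2 * Ig (axis j (s / lam)))"
    unfolding 2[symmetric] using Ig_nonneg by (simp add: ennreal_mult Ig_def)
  finally have "ennreal (Ig (axis i s)) \<le> ennreal (\<gamma>^2 * Ig (axis j (s / lam)))" using 1 by simp
  moreover have "\<gamma>^2 * Ig (axis j (s / lam)) \<ge> 0" using Ig_nonneg by (simp add: Ig_def)
  ultimately show ?thesis by (simp add: ennreal_le_iff)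
qed

lemma Psi_swap: "Psi (axis i s) \<le> \<gamma>^2 * Psi (axis j (s / lam))"
proof -
  have "Q (axis i s) \<le> \<gamma>^2 * Q (axis j (s / lam))"
  proof -
    have "s^2 \<le> (s / lam)^2"
    proof -
      have "\<bar>s\<bar> * lam \<le> \<bar>s\<bar>" by (rule mult_right_le_one_le) (use lam in auto)
      then have "\<bar>s\<bar> \<le> \<bar>s\<bar> / lam" using lam by (simp add: le_divide_eq)
      then have "\<bar>s\<bar>^2 \<le> (\<bar>s\<bar> / lam)^2" by (intro power_mono) auto
      then show ?thesis by (simp add: power_divide)
    qed
    then have "\<gamma> * a0 * s^2 \<le> \<gamma> * a0 * (s / lam)^2"
      using \<gamma>_ge a0_nonneg by (intro mult_left_mono) auto
    also have "\<dots> = \<gamma>^2 * (a0 / \<gamma> * (s / lam)^2)"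
      using \<gamma>_ge by (simp add: power2_eq_square)
    also have "\<dots> \<le> \<gamma>^2 * Q (axis j (s / lam))"
      by (intro mult_left_mono Q_axis_lower) auto
    finally show ?thesis using Q_axis_upper[of i s] by linarith
  qed
  then show ?thesis using Ig_swap[of i s j] by (simp add: Psi_eq' distrib_left)
qed


lemma Psi_meas[measurable]: "Psi \<in> borel_measurable lborel"
proof -
  have cQ: "continuous_on UNIV (\<lambda>\<xi>::real^'n. \<xi> \<bullet> (A *v \<xi>))"
    by (intro continuous_intros linear_continuous_on matrix_vector_mul_bounded_linear)
  have [measurable]: "(\<lambda>\<xi>::real^'n. \<xi> \<bullet> (A *v \<xi>)) \<in> borel_measurable borel"
    by (rule borel_measurable_continuous_onI[OF cQ])
  have [measurable]: "(\<lambda>(\<xi>, y). (1 - cos (\<xi> \<bullet> y)) * J y) \<in> borel_measurable (lborel \<Otimes>\<^sub>M (lborel::(real^'n) measure))"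
    by measurable
  show ?thesis unfolding levy_exponent_def by measurable
qed


definition "rho0 = max 2 (5 * \<kappa>2 / 4)"
definition "eps0 = 1 - cos (3/4::real)"
definition "c0 = eps0 * a3 * (2 / (5 * real CARD('n)))^CARD('n) * (4/5) powr \<beta>1 / \<gamma>"

lemma eps0_pos: "eps0 > 0"
proof -
  have "cos (3/4::real) < cos 0" using pi_gt3 by (subst cos_mono_less_eq) auto
  then show ?thesis by (simp add: eps0_def)
qed

lemma c0_pos: "c0 > 0"
  unfolding c0_def using eps0_pos a3_pos \<gamma>_ge by simp

lemma one_minus_cos_ge_eps0:
  assumes "3/4 \<le> t" "t \<le> 5/4" shows "eps0 \<le> 1 - cos t"
proof -
  have "cos t \<le> cos (3/4)" using assms pi_gt3 by (intro cos_monotone_0_pi_le) auto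
  then show ?thesis by (simp add: eps0_def)
qed

lemma \<phi>1_small_bound:
  assumes "0 < r" "r < 1" shows "\<phi>1 r \<le> r powr \<beta>1 / a3"
proof -
  have "a3 * (1 / r) powr \<beta>1 \<le> \<phi>1 1 / \<phi>1 r" using conjunct1[OF \<phi>1_scale[OF assms]] .
  then have "a3 * (1 / r powr \<beta>1) \<le> 1 / \<phi>1 r" using assms by (simp add: \<phi>1_1 powr_divide)
  moreover have "\<phi>1 r > 0" using \<phi>1_pos assms by simp
  moreover have "r powr \<beta>1 > 0" using assms by simp
  ultimately show ?thesis using a3_pos by (simp add: field_simps)
qed

lemma Ig_lower:
  assumes \<rho>: "norm \<eta> \<ge> rho0"
  shows "c0 * norm \<eta> powr \<beta>1 \<le> Ig \<eta>"
proof -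
  define \<rho> where "\<rho> = norm \<eta>"
  have \<rho>2: "\<rho> \<ge> 2" and \<rho>k: "\<rho> \<ge> 5 * \<kappa>2 / 4" using \<rho> unfolding \<rho>_def rho0_def by auto
  define d where "d = real CARD('n)"
  have d1: "d \<ge> 1" unfolding d_def by simp
  define a where "a = 1 / \<rho>"
  have a0: "a > 0" using \<rho>2 by (simp add: a_def)
  define h where "h = a / (4 * d)"
  have h0: "h > 0" using a0 d1 by (simp add: h_def)
  define c where "c = (a / \<rho>) *\<^sub>R \<eta>"
  have \<eta>0: "\<eta> \<noteq> 0" using \<rho>2 unfolding \<rho>_def by auto
  have nc: "norm c = a" using \<rho>2 a0 \<eta>0 by (simp add: c_def \<rho>_def)
  have \<eta>c: "\<eta> \<bullet> c = 1" using \<rho>2 \<eta>0 by (simp add: c_def a_def \<rho>_def power2_eq_square[symmetric] dot_square_norm)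
  define l where "l = (\<chi> i. c $ i - h)"
  define u where "u = (\<chi> i. c $ i + h)"
  define Cb where "Cb = cbox l u"
  define r where "r = 5 * a / 4"
  have r0: "r > 0" and r1: "r < 1" using a0 \<rho>2 by (auto simp: r_def a_def field_simps)
  have rk: "\<kappa>2 * r \<le> 1" using \<rho>k \<rho>2 \<kappa>_pos by (simp add: r_def a_def field_simps)
  define Kj where "Kj = 1 / (\<gamma> * (r ^ CARD('n) * \<phi>1 r))"
  have Kj0: "Kj \<ge> 0" unfolding Kj_def using \<phi>1_pos[OF r0] r0 \<gamma>_ge by simp
  have inCb: "norm (y - c) \<le> a / 4" if y: "y \<in> Cb" for y
  proof -
    have "\<bar>(y - c) $ i\<bar> \<le> h" for i
    proof -
      have "c $ i - h \<le> y $ i \<and> y $ i \<le> c $ i + h" using y by (simp add: Cb_def l_def u_def mem_box_cart)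
      then show ?thesis by (simp add: abs_le_iff)
    qed
    then have "(\<Sum>i\<in>UNIV. \<bar>(y - c) $ i\<bar>) \<le> (\<Sum>i\<in>(UNIV::'n set). h)" by (intro sum_mono) auto
    also have "\<dots> = a / 4" using d1 by (simp add: h_def d_def)
    finally show ?thesis using norm_le_l1_cart[of "y - c"] by linarith
  qed
  have pt: "eps0 * Kj \<le> g \<eta> y" if y: "y \<in> Cb" for y
  proof -
    have nyc: "norm (y - c) \<le> a / 4" by (rule inCb[OF y])
    have "\<bar>\<eta> \<bullet> (y - c)\<bar> \<le> \<rho> * norm (y - c)" unfolding \<rho>_def by (rule Cauchy_Schwarz_ineq2)
    also have "\<dots> \<le> \<rho> * (a / 4)" using nyc \<rho>2 by (intro mult_left_mono) auto
    also have "\<dots> = 1/4" using \<rho>2 by (simp add: a_def)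
    finally have "\<bar>\<eta> \<bullet> (y - c)\<bar> \<le> 1/4" .
    moreover have "\<eta> \<bullet> y = 1 + \<eta> \<bullet> (y - c)" using \<eta>c by (simp add: inner_diff_right)
    ultimately have t: "3/4 \<le> \<eta> \<bullet> y" "\<eta> \<bullet> y \<le> 5/4" by auto
    have ny1: "norm y \<le> r" using nyc nc norm_triangle_ineq[of c "y - c"] by (simp add: r_def)
    have ny0: "norm y \<ge> 3 * a / 4" using nyc nc norm_triangle_ineq[of y "c - y"]
      by (simp add: norm_minus_commute)
    then have y0: "y \<noteq> 0" using a0 by auto
    have nyp: "norm y > 0" using y0 by simp
    have \<psi>: "\<psi>1 (\<kappa>2 * norm y) = 1"
    proof (rule \<psi>1_small)
      show "0 < \<kappa>2 * norm y" using \<kappa>_pos nyp by simp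
      have "\<kappa>2 * norm y \<le> \<kappa>2 * r" using ny1 \<kappa>_pos by (intro mult_left_mono) auto
      then show "\<kappa>2 * norm y \<le> 1" using rk by linarith
    qed
    have "ereal (1 / \<gamma>) / (ereal (N y) * 1) \<le> ereal (J y)" using J_lower_ereal[OF y0] \<psi> by simp
    then have Jl: "1 / \<gamma> / N y \<le> J y" using N_pos[OF y0] by simp
    have "N y \<le> r ^ CARD('n) * \<phi>1 r"
      unfolding N_def using ny1 \<phi>1_mono[of "norm y" r] r0 \<phi>1_pos[OF nyp]
      by (intro mult_mono power_mono) auto
    then have "Kj \<le> 1 / \<gamma> / N y" unfolding Kj_def using N_pos[OF y0] \<gamma>_ge
      by (simp add: divide_simps mult_left_mono)
    with Jl have KJ: "Kj \<le> J y" by linarith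
    have "eps0 * Kj \<le> (1 - cos (\<eta> \<bullet> y)) * J y"
      using one_minus_cos_ge_eps0[OF t] KJ eps0_pos Kj0
      by (intro mult_mono) auto
    then show ?thesis by (simp add: g_def)
  qed
  have lu: "l $ i \<le> u $ i" for i using h0 by (simp add: l_def u_def)
  have mCb: "emeasure lborel Cb = ennreal ((2 * h) ^ CARD('n))"
  proof -
    have "emeasure lborel Cb = ennreal (\<Prod>b\<in>Basis. (u - l) \<bullet> b)"
      unfolding Cb_def
    proof (rule emeasure_lborel_cbox)
      fix b :: "real^'n" assume "b \<in> Basis"
      then obtain k where "b = axis k 1" by (auto simp: Basis_vec_def)
      then show "l \<bullet> b \<le> u \<bullet> b" using lu[of k] by (simp add: inner_axis)
    qed
    also have "(\<Prod>b\<in>Basis. (u - l) \<bullet> b) = (2 * h) ^ CARD('n)"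
      by (simp add: prod_Basis_vec inner_axis l_def u_def)
    finally show ?thesis .
  qed
  have "ennreal (eps0 * Kj) * emeasure lborel Cb = (\<integral>\<^sup>+y. ennreal (eps0 * Kj) * indicator Cb y \<partial>lborel)"
    by (simp add: Cb_def nn_integral_cmult_indicator)
  also have "\<dots> \<le> (\<integral>\<^sup>+y. ennreal (g \<eta> y) \<partial>lborel)"
  proof (intro nn_integral_mono)
    fix y show "ennreal (eps0 * Kj) * indicator Cb y \<le> ennreal (g \<eta> y)"
      using pt[of y] by (cases "y \<in> Cb") (auto intro: ennreal_leI)
  qed
  also have "\<dots> = ennreal (Ig \<eta>)" by (rule Ig_nn)
  finally have "ennreal (eps0 * Kj * (2 * h) ^ CARD('n)) \<le> ennreal (Ig \<eta>)"
    using mCb eps0_pos Kj0 h0 by (simp add: ennreal_mult)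
  then have main: "eps0 * Kj * (2 * h) ^ CARD('n) \<le> Ig \<eta>"
    using Ig_nonneg by (simp add: ennreal_le_iff Ig_def)
  have "Kj \<ge> a3 / (\<gamma> * (r ^ CARD('n) * r powr \<beta>1))"
  proof -
    have "\<phi>1 r \<le> r powr \<beta>1 / a3" by (rule \<phi>1_small_bound[OF r0 r1])
    then have "\<gamma> * (r ^ CARD('n) * \<phi>1 r) \<le> \<gamma> * (r ^ CARD('n) * (r powr \<beta>1 / a3))"
      using r0 \<gamma>_ge by (intro mult_left_mono) auto
    then have "1 / (\<gamma> * (r ^ CARD('n) * (r powr \<beta>1 / a3))) \<le> Kj"
      unfolding Kj_def using r0 \<gamma>_ge \<phi>1_pos[OF r0] a3_pos
      by (intro divide_left_mono mult_pos_pos) auto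
    then show ?thesis using a3_pos by (simp add: field_simps)
  qed
  then have "eps0 * (a3 / (\<gamma> * (r ^ CARD('n) * r powr \<beta>1))) * (2 * h) ^ CARD('n) \<le> eps0 * Kj * (2 * h) ^ CARD('n)"
    using eps0_pos h0 by (intro mult_right_mono mult_left_mono) auto
  moreover have "eps0 * (a3 / (\<gamma> * (r ^ CARD('n) * r powr \<beta>1))) * (2 * h) ^ CARD('n) = c0 * \<rho> powr \<beta>1"
  proof -
    have hr: "2 * h / r = 2 / (5 * d)" using a0 d1 by (simp add: h_def r_def field_simps)
    have rr: "1 / r = (4/5) * \<rho>" using \<rho>2 by (simp add: r_def a_def)
    have "eps0 * (a3 / (\<gamma> * (r ^ CARD('n) * r powr \<beta>1))) * (2 * h) ^ CARD('n)
          = eps0 * a3 * (2 * h / r) ^ CARD('n) * (1 / r) powr \<beta>1 / \<gamma>"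
      using r0 \<gamma>_ge by (simp add: power_divide powr_divide field_simps)
    also have "\<dots> = c0 * \<rho> powr \<beta>1"
    proof -
      have pm: "(4 * \<rho> / 5) powr \<beta>1 = (4/5) powr \<beta>1 * \<rho> powr \<beta>1"
        using powr_mult[of "4/5" \<rho> \<beta>1] \<rho>2 by simp
      show ?thesis unfolding hr rr c0_def d_def using \<rho>2 by (simp add: pm)
    qed
    finally show ?thesis .
  qed
  ultimately show ?thesis using main unfolding \<rho>_def by linarith
qed


lemma Psi_lower_all: "c0 * norm \<xi> powr \<beta>1 - c0 * rho0 powr \<beta>1 \<le> Psi \<xi>"
proof (cases "norm \<xi> \<ge> rho0")
  case True
  have "c0 * norm \<xi> powr \<beta>1 \<le> Ig \<xi>" by (rule Ig_lower[OF True])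
  moreover have "Ig \<xi> \<le> Psi \<xi>" using Q_nonneg by (simp add: Psi_eq')
  moreover have "c0 * rho0 powr \<beta>1 \<ge> 0" using c0_pos by simp
  ultimately show ?thesis by linarith
next
  case False
  have "norm \<xi> powr \<beta>1 \<le> rho0 powr \<beta>1" using False \<beta>12 by (intro powr_mono2) auto
  then have "c0 * norm \<xi> powr \<beta>1 \<le> c0 * rho0 powr \<beta>1" using c0_pos by simp
  then show ?thesis using Psi_nonneg[of \<xi>] by linarith
qed

lemma claim2: assumes t: "t > 0" shows "integrable lborel (\<lambda>\<xi>. exp (- t * Psi \<xi>))"
proof -
  define d where "d = real CARD('n)"
  have d1: "d \<ge> 1" unfolding d_def by simp
  define b where "b = t * c0 / d"
  have b0: "b > 0" unfolding b_def using t c0_pos d1 by simp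
  define E where "E = exp (t * c0 * rho0 powr \<beta>1)"
  define h where "h = (\<lambda>x::real. exp (- b * \<bar>x\<bar> powr \<beta>1))"
  have hm[measurable]: "h \<in> borel_measurable borel" unfolding h_def by measurable
  have hi: "integrable lborel h" unfolding h_def by (rule integrable_exp_neg_powr[OF b0 \<beta>12(1)])
  have hint: "integrable lborel (\<lambda>\<xi>::real^'n. E * (\<Prod>i\<in>UNIV. h (\<xi> $ i)))"
    by (intro integrable_mult_right integrable_prod_coords hm hi) (simp add: h_def)
  show ?thesis
  proof (rule Bochner_Integration.integrable_bound[OF hint])
    show "(\<lambda>\<xi>. exp (- t * Psi \<xi>)) \<in> borel_measurable lborel" by measurable
    show "AE \<xi> in lborel. norm (exp (- t * Psi \<xi>)) \<le> norm (E * (\<Prod>i\<in>UNIV. h (\<xi> $ i)))"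
    proof (intro AE_I2)
      fix \<xi> :: "real^'n"
      have "(\<Sum>i\<in>UNIV. \<bar>\<xi> $ i\<bar> powr \<beta>1) \<le> (\<Sum>i\<in>(UNIV::'n set). norm \<xi> powr \<beta>1)"
        using \<beta>12 by (intro sum_mono powr_mono2 component_le_norm_cart) auto
      also have "\<dots> = d * norm \<xi> powr \<beta>1" by (simp add: d_def)
      finally have s: "(\<Sum>i\<in>UNIV. \<bar>\<xi> $ i\<bar> powr \<beta>1) \<le> d * norm \<xi> powr \<beta>1" .
      have "b * (\<Sum>i\<in>UNIV. \<bar>\<xi> $ i\<bar> powr \<beta>1) \<le> b * (d * norm \<xi> powr \<beta>1)"
        using s b0 by (intro mult_left_mono) auto
      also have "\<dots> = t * c0 * norm \<xi> powr \<beta>1" using d1 by (simp add: b_def)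
      finally have s2: "b * (\<Sum>i\<in>UNIV. \<bar>\<xi> $ i\<bar> powr \<beta>1) \<le> t * c0 * norm \<xi> powr \<beta>1" .
      have "t * (c0 * norm \<xi> powr \<beta>1 - c0 * rho0 powr \<beta>1) \<le> t * Psi \<xi>"
        using Psi_lower_all[of \<xi>] t by (intro mult_left_mono) auto
      then have "- t * Psi \<xi> \<le> t * c0 * rho0 powr \<beta>1 + (\<Sum>i\<in>UNIV. - b * \<bar>\<xi> $ i\<bar> powr \<beta>1)"
      proof -
        have "(\<Sum>i\<in>UNIV. - b * \<bar>\<xi> $ i\<bar> powr \<beta>1) = - (b * (\<Sum>i\<in>UNIV. \<bar>\<xi> $ i\<bar> powr \<beta>1))"
          by (simp add: sum_negf sum_distrib_left)
        then show ?thesis using s2 \<open>t * (c0 * norm \<xi> powr \<beta>1 - c0 * rho0 powr \<beta>1) \<le> t * Psi \<xi>\<close>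
          by (simp add: algebra_simps)
      qed
      then have "exp (- t * Psi \<xi>) \<le> exp (t * c0 * rho0 powr \<beta>1 + (\<Sum>i\<in>UNIV. - b * \<bar>\<xi> $ i\<bar> powr \<beta>1))"
        by simp
      also have "\<dots> = E * (\<Prod>i\<in>UNIV. h (\<xi> $ i))"
        by (simp add: E_def h_def exp_add exp_sum)
      finally have "exp (- t * Psi \<xi>) \<le> E * (\<Prod>i\<in>UNIV. h (\<xi> $ i))" .
      moreover have "E * (\<Prod>i\<in>UNIV. h (\<xi> $ i)) \<ge> 0" by (simp add: E_def h_def prod_nonneg)
      ultimately show "norm (exp (- t * Psi \<xi>)) \<le> norm (E * (\<Prod>i\<in>UNIV. h (\<xi> $ i)))" by simp
    qed
  qed
qed

lemma bdd_Psi: "bdd_above (Psi ` cball 0 r)"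
proof (rule bdd_aboveI2)
  fix z assume "z \<in> cball (0::real^'n) r"
  then show "Psi z \<le> \<gamma> * a0 * r ^ 2 + 2 * max 1 (r ^ 2) * KJ" by (intro Psi_upper_mono) auto
qed

lemma Psi_star_nonneg: "r \<ge> 0 \<Longrightarrow> Psi_star Psi r \<ge> 0"
  unfolding Psi_star_def by (rule cSUP_upper2[OF bdd_Psi, of 0]) (auto simp: Psi_nonneg)

lemma Psi_star_scale:
  assumes M: "M \<ge> M0" and r: "r > 0"
  shows "cM * M powr \<beta>1 * Psi_star Psi r \<le> Psi_star Psi (M * r)"
proof -
  have M1: "M > 1" using M M0_ge by simp
  have cp: "cM * M powr \<beta>1 > 0" using cM_pos M1 by simp
  have "Psi z \<le> Psi_star Psi (M * r) / (cM * M powr \<beta>1)" if z: "z \<in> cball 0 r" for z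
  proof -
    have "M *\<^sub>R z \<in> cball 0 (M * r)" using z M1 by auto
    then have "Psi (M *\<^sub>R z) \<le> Psi_star Psi (M * r)"
      unfolding Psi_star_def by (rule cSUP_upper[OF _ bdd_Psi])
    moreover have "cM * M powr \<beta>1 * Psi z \<le> Psi (M *\<^sub>R z)" by (rule Psi_scale[OF M])
    ultimately show ?thesis using cp by (simp add: field_simps)
  qed
  then have "Psi_star Psi r \<le> Psi_star Psi (M * r) / (cM * M powr \<beta>1)"
    unfolding Psi_star_def[of Psi r] using r by (intro cSUP_least) auto
  then show ?thesis using cp by (simp add: field_simps)
qed

lemma claim1:
  "((\<lambda>M. SUP r\<in>{0<..}. Psi_star Psi r / Psi_star Psi (M * r)) \<longlongrightarrow> 0) at_top"
proof (rule tendsto_sandwich[where f="\<lambda>_. 0" and h="\<lambda>M. (1 / cM) * M powr (- \<beta>1)"])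
  have bnd: "Psi_star Psi r / Psi_star Psi (M * r) \<le> (1 / cM) * M powr (- \<beta>1)"
    and nn: "0 \<le> Psi_star Psi r / Psi_star Psi (M * r)" if M: "M \<ge> M0" and r: "r > 0" for M r
  proof -
    have M1: "M > 1" using M M0_ge by simp
    have cp: "cM * M powr \<beta>1 > 0" using cM_pos M1 by simp
    have p0: "Psi_star Psi r \<ge> 0" using r by (intro Psi_star_nonneg) auto
    have p1: "Psi_star Psi (M * r) \<ge> 0" using r M1 by (intro Psi_star_nonneg) auto
    show "0 \<le> Psi_star Psi r / Psi_star Psi (M * r)" using p0 p1 by simp
    have sc: "cM * M powr \<beta>1 * Psi_star Psi r \<le> Psi_star Psi (M * r)" by (rule Psi_star_scale[OF M r])
    have eq: "(1 / cM) * M powr (- \<beta>1) = 1 / (cM * M powr \<beta>1)" using M1 by (simp add: powr_minus divide_inverse)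
    show "Psi_star Psi r / Psi_star Psi (M * r) \<le> (1 / cM) * M powr (- \<beta>1)"
    proof (cases "Psi_star Psi (M * r) = 0")
      case True then show ?thesis using cM_pos by simp
    next
      case False
      then have pp: "Psi_star Psi (M * r) > 0" using p1 by simp
      have "Psi_star Psi r / Psi_star Psi (M * r) \<le> 1 / (cM * M powr \<beta>1)"
        using sc pp cp by (simp add: divide_simps mult.commute)
      then show ?thesis using eq by simp
    qed
  qed
  show "\<forall>\<^sub>F M in at_top. 0 \<le> (SUP r\<in>{0<..}. Psi_star Psi r / Psi_star Psi (M * r))"
    unfolding eventually_at_top_linorder
  proof (intro exI allI impI)
    fix M assume M: "M \<ge> M0"
    have "bdd_above ((\<lambda>r. Psi_star Psi r / Psi_star Psi (M * r)) ` {0<..})"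
      using bnd[OF M] by (intro bdd_aboveI2) auto
    then show "0 \<le> (SUP r\<in>{0<..}. Psi_star Psi r / Psi_star Psi (M * r))"
      by (rule cSUP_upper2[where x=1]) (use nn[OF M, of 1] in auto)
  qed
  show "\<forall>\<^sub>F M in at_top. (SUP r\<in>{0<..}. Psi_star Psi r / Psi_star Psi (M * r)) \<le> (1 / cM) * M powr (- \<beta>1)"
    unfolding eventually_at_top_linorder
  proof (intro exI allI impI)
    fix M assume M: "M \<ge> M0"
    show "(SUP r\<in>{0<..}. Psi_star Psi r / Psi_star Psi (M * r)) \<le> (1 / cM) * M powr (- \<beta>1)"
      by (rule cSUP_least) (use bnd[OF M] in auto)
  qed
  show "((\<lambda>_. 0::real) \<longlongrightarrow> 0) at_top" by simp
  have "((\<lambda>M::real. M powr (- \<beta>1)) \<longlongrightarrow> 0) at_top"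
    using \<beta>12 by (intro tendsto_neg_powr filterlim_ident) auto
  then show "((\<lambda>M. (1 / cM) * M powr (- \<beta>1)) \<longlongrightarrow> 0) at_top"
    by (rule tendsto_mult_right_zero)
qed

lemma axis_scaleR_real: "c *\<^sub>R axis k (s::real) = axis k (c * s)"
  by (simp add: vec_eq_iff axis_def)

lemma claim3: "\<exists>c\<ge>1. \<forall>r>0. Psi_star Psi r \<le> c * Psi1_star Psi k r"
proof -
  obtain m :: nat where m: "2 / lam < 2 ^ m" using real_arch_pow[of 2 "2 / lam"] by auto
  have lm: "lam * 2 ^ m \<ge> 2" using m lam by (simp add: field_simps)
  define c where "c = max 1 (Csum * real CARD('n) * \<gamma>^2 * 4^m)"
  have c1: "c \<ge> 1" unfolding c_def by simp
  have "\<forall>r>0. Psi_star Psi r \<le> c * Psi1_star Psi k r"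
  proof (intro allI impI)
    fix r :: real assume r: "r > 0"
    define P where "P = Psi1_star Psi k r"
    have bdd1: "bdd_above ((\<lambda>s. Psi (axis k s)) ` {-r<..<r})"
    proof (rule bdd_aboveI2)
      fix s assume "s \<in> {-r<..<r}"
      then have "\<bar>s\<bar> < r" by (simp add: abs_less_iff)
      then have "norm (axis k s) \<le> r" by (simp add: norm_axis_real)
      then show "Psi (axis k s) \<le> \<gamma> * a0 * r ^ 2 + 2 * max 1 (r ^ 2) * KJ" by (rule Psi_upper_mono)
    qed
    have P0: "P \<ge> 0" unfolding P_def Psi1_star_def
      by (rule cSUP_upper2[OF bdd1, of 0]) (use r Psi_nonneg in auto)
    have ax: "Psi (axis i s) \<le> \<gamma>^2 * 4^m * P" if s: "\<bar>s\<bar> \<le> r" for i s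
    proof -
      define s' where "s' = s / (lam * 2^m)"
      have "\<bar>s'\<bar> = \<bar>s\<bar> / (lam * 2^m)" using lam by (simp add: s'_def abs_divide)
      also have "\<dots> \<le> \<bar>s\<bar> / 2" using lm lam by (intro divide_left_mono) auto
      also have "\<dots> < r" using s r by linarith
      finally have s'r: "s' \<in> {-r<..<r}" by auto
      have "Psi (axis k s') \<le> P"
        unfolding P_def Psi1_star_def by (rule cSUP_upper[OF s'r bdd1])
      have "Psi (axis i s) \<le> \<gamma>^2 * Psi (axis k (s / lam))" by (rule Psi_swap)
      also have "axis k (s / lam) = (2^m) *\<^sub>R axis k s'"
        using lam by (simp add: axis_scaleR_real s'_def)
      also have "\<gamma>^2 * Psi ((2^m) *\<^sub>R axis k s') \<le> \<gamma>^2 * (4^m * Psi (axis k s'))"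
        by (intro mult_left_mono Psi_double_pow) auto
      also have "\<dots> \<le> \<gamma>^2 * (4^m * P)"
        using \<open>Psi (axis k s') \<le> P\<close> by (intro mult_left_mono) auto
      finally show ?thesis by (simp add: mult.assoc)
    qed
    have "Psi z \<le> c * P" if z: "z \<in> cball 0 r" for z
    proof -
      have "Psi z \<le> Csum * (\<Sum>i\<in>UNIV. Psi (axis i (z $ i)))" by (rule Psi_sum)
      also have "\<dots> \<le> Csum * (\<Sum>i\<in>(UNIV::'n set). \<gamma>^2 * 4^m * P)"
      proof (intro mult_left_mono sum_mono ax)
        fix i
        have "\<bar>z $ i\<bar> \<le> norm z" by (rule component_le_norm_cart)
        then show "\<bar>z $ i\<bar> \<le> r" using z by simp
      qed (use Csum_ge in auto)
      also have "\<dots> = (Csum * real CARD('n) * \<gamma>^2 * 4^m) * P" by simp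
      also have "\<dots> \<le> c * P" unfolding c_def using P0 by (intro mult_right_mono) auto
      finally show ?thesis .
    qed
    then show "Psi_star Psi r \<le> c * P"
      unfolding Psi_star_def using r by (intro cSUP_least) auto
  qed
  then show ?thesis using c1 by blast
qed

end

theorem corollary5p2:
  fixes A :: "real^'n^'n" and J :: "real^'n \<Rightarrow> real"
    and \<psi>1 :: "real \<Rightarrow> ereal" and \<phi>1 :: "real \<Rightarrow> real"
    and k :: 'n
    and cU b1 b2 \<gamma>1 \<gamma>2 a3 a4 \<beta>1 \<beta>2 \<gamma> \<kappa>1 \<kappa>2 a0 :: real
    and \<beta> :: ereal
  assumes A_sym: "transpose A = A"
    and A_nonneg: "\<And>\<xi>. \<xi> \<bullet> (A *v \<xi>) \<ge> 0"
    and J_meas: "J \<in> borel_measurable borel"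
    and J_nonneg: "\<And>y. y \<noteq> 0 \<Longrightarrow> J y \<ge> 0"
    and J_sym: "\<And>y. J (- y) = J y"
    and J_int: "integrable lborel (\<lambda>z. min 1 (norm z ^ 2) * J z)"
    and UJS_c: "cU > 0"
    and UJS: "\<And>y r. 0 < r \<Longrightarrow> r \<le> norm y / 2 \<Longrightarrow>
               J y \<le> cU / r ^ CARD('n) * (LINT z:ball 0 r|lborel. J (y - z))"
    and \<psi>1_mono: "mono_on {0..} \<psi>1"
    and \<psi>1_small: "\<And>r. 0 < r \<Longrightarrow> r \<le> 1 \<Longrightarrow> \<psi>1 r = 1"
    and b_pos: "0 < b1" "b1 \<le> b2"
    and \<gamma>i_pos: "0 < \<gamma>1" "\<gamma>1 \<le> \<gamma>2"
    and \<beta>_nonneg: "\<beta> \<ge> 0"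
    and \<psi>1_fin: "\<beta> \<noteq> \<infinity> \<Longrightarrow> (\<And>r. r > 1 \<Longrightarrow>
               ereal (b1 * exp (\<gamma>1 * r powr real_of_ereal \<beta>)) \<le> \<psi>1 r \<and>
               \<psi>1 r \<le> ereal (b2 * exp (\<gamma>2 * r powr real_of_ereal \<beta>)))"
    and \<psi>1_inf: "\<beta> = \<infinity> \<Longrightarrow> (\<And>r. r > 1 \<Longrightarrow> \<psi>1 r = \<infinity>)"
    and \<phi>1_strict: "strict_mono_on {0..} \<phi>1"
    and \<phi>1_0: "\<phi>1 0 = 0" and \<phi>1_1: "\<phi>1 1 = 1"
    and a34_pos: "a3 > 0" "a4 > 0"
    and \<beta>12: "0 < \<beta>1" "\<beta>1 \<le> \<beta>2" "\<beta>2 < 2"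
    and \<phi>1_scale: "\<And>r R. 0 < r \<Longrightarrow> r < R \<Longrightarrow>
               a3 * (R / r) powr \<beta>1 \<le> \<phi>1 R / \<phi>1 r \<and> \<phi>1 R / \<phi>1 r \<le> a4 * (R / r) powr \<beta>2"
    and \<gamma>_ge: "\<gamma> \<ge> 1"
    and \<kappa>_pos: "\<kappa>1 > 0" "\<kappa>2 > 0"
    and a0_nonneg: "a0 \<ge> 0"
    and A_ell: "\<And>\<xi>. a0 / \<gamma> * norm \<xi> ^ 2 \<le> \<xi> \<bullet> (A *v \<xi>) \<and>
                     \<xi> \<bullet> (A *v \<xi>) \<le> \<gamma> * a0 * norm \<xi> ^ 2"
    and J_bounds: "\<And>x. x \<noteq> 0 \<Longrightarrow>
        ereal (1 / \<gamma>) / (ereal (norm x ^ CARD('n) * \<phi>1 (norm x)) * \<psi>1 (\<kappa>2 * norm x)) \<le> ereal (J x) \<and>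
        ereal (J x) \<le> ereal \<gamma> / (ereal (norm x ^ CARD('n) * \<phi>1 (norm x)) * \<psi>1 (\<kappa>1 * norm x))"
  shows "((\<lambda>M. SUP r\<in>{0<..}. Psi_star (levy_exponent A J) r / Psi_star (levy_exponent A J) (M * r))
            \<longlongrightarrow> 0) at_top \<and>
    (\<forall>t>0. integrable lborel (\<lambda>\<xi>. exp (- t * levy_exponent A J \<xi>))) \<and>
    (\<exists>c\<ge>1. \<forall>r>0. Psi_star (levy_exponent A J) r \<le> c * Psi1_star (levy_exponent A J) k r)"
proof -
  interpret levy_setting A J \<psi>1 \<phi>1 a3 a4 \<beta>1 \<beta>2 \<gamma> \<kappa>1 \<kappa>2 a0
    by (rule levy_setting.intro) (fact assms)+
  show ?thesis using claim1 claim2 claim3 by blast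
qed

end
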